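(* Set $L = (N -1)(r-1) + 1$. The following formula holds in $E_{n,m}(L)$: \begin{equation*} \sum_{0 \le k_1 \le L}\cdots \sum_{0 \le k_m \le L}(-1)^{k_1 + \cdots + k_m} \begin{bmatrix} L \\ k_1 \end{bmatrix} \cdots \begin{bmatrix} L \\ k_m \end{bmatrix}(\mathbf{k}, \mathbf 0, \cdots, \mathbf 0, \mathbf{k}') = 0, \end{equation*} where $\mathbf{k} = {}^t(k_1, \dots, k_m)$ and $\mathbf{k}' = {}^t(L - k_1, \dots, L - k_m)$ are column vectors, so $(\mathbf{k}, \mathbf 0, \dots, \mathbf 0, \mathbf{k}')$ is the $m \times n$ matrix with first column $\mathbf{k}$, last column $\mathbf{k}'$ and all other columns zero.
   Context: Let $q$ be an indeterminate, $[n] = \frac{q^n - q^{-n}}{q - q^{-1}}$, $\begin{bmatrix} n \\ m\end{bmatrix} = \frac{[n][n-1]\cdots[n-m+1]}{[m]^!}$ ($m\ge1$), $\begin{bmatrix} n \\ 0\end{bmatrix}=1$. Fix integers $r \ge 2$, $m \ge 1$, $n \ge 2$ and $N \le n$, and for each $i \in [1,m]$ a subset $A_i \subset [1, n-1]$ with $|A_i| = N-1$. Let $V_{n,m}$ be the $\mathbb{Q}(q)$-vector space spanned by matrices $\mathbf{a} = (a^{(k)}_i) \in M(m,n)$ with entries in $\mathbb{N}$ (rows $i \in [1,m]$, columns $k \in [1,n]$), subject to the relations: for each entry $a^{(k)}_i$ with $k \le n-1$, $\mathbf{a} = \sum_{1 \le t \le r}(-1)^{t-1}\begin{bmatrix}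 r \\ t\end{bmatrix}\mathbf{a}(t)$ if $k \in A_i$ and $a^{(k)}_i \ge r$, and $\mathbf{a} = \mathbf{a}(1)$ if $k \notin A_i$ and $a^{(k)}_i \ge 1$; here $\mathbf{a}(t)$ is obtained from $\mathbf{a}$ by replacing the $i$-th row by $(a^{(1)}_i, \dots, a^{(k-1)}_i, a^{(k)}_i - t, a^{(k+1)}_i + t, a^{(k+2)}_i, \dots, a^{(n)}_i)$ and keeping the other rows. For $L' \ge 1$, $E_{n,m}(L')$ is the subspace of $V_{n,m}$ spanned by the matrices $\mathbf{a}$ with $\sum_{k=1}^n a^{(k)}_i = L'$ for every $i$ and $a^{(k)}_i \in [0, r-1]$ for $1 \le k < n$. *)

theory Defs
  imports "HOL-Computational_Algebra.Polynomial" "HOL-Computational_Algebra.Fraction_Field" "HOL-Library.Function_Algebras" "HOL-Library.FuncSet"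
begin

type_synonym qfield = "rat poly fract"

definition qvar :: qfield where
  "qvar = Fract [:0, 1:] 1"

definition qint :: "int \<Rightarrow> qfield" where
  "qint n = (qvar powi n - qvar powi (- n)) / (qvar - inverse qvar)"

definition qfact :: "nat \<Rightarrow> qfield" where
  "qfact m = (\<Prod>j = 1..m. qint (int j))"

definition qbinom :: "int \<Rightarrow> nat \<Rightarrow> qfield" where
  "qbinom n m = (if m = 0 then 1 else (\<Prod>j<m. qint (n - int j)) / qfact m)"

text \<open>Matrices a = (a_i^(k)) are functions  i \<mapsto> k \<mapsto> a_i^(k); rows 1..m, columns 1..n;
  entries outside this range are required to be 0.\<close>
type_synonym mat = "nat \<Rightarrow> nat \<Rightarrow> nat"

definition valid_mat :: "nat \<Rightarrow> nat \<Rightarrow> mat \<Rightarrow> bool" where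
  "valid_mat m n a \<longleftrightarrow> (\<forall>i k. (i \<notin> {1..m} \<or> k \<notin> {1..n}) \<longrightarrow> a i k = 0)"

type_synonym comb = "mat \<Rightarrow> qfield"

definition basis_vec :: "mat \<Rightarrow> comb" where
  "basis_vec a = (\<lambda>b. if b = a then 1 else 0)"

definition scale_comb :: "qfield \<Rightarrow> comb \<Rightarrow> comb" where
  "scale_comb c f = (\<lambda>b. c * f b)"

definition shift_mat :: "mat \<Rightarrow> nat \<Rightarrow> nat \<Rightarrow> nat \<Rightarrow> mat" where
  "shift_mat a i k t = a(i := (a i)(k := a i k - t, Suc k := a i (Suc k) + t))"

inductive_set rel_space :: "nat \<Rightarrow> nat \<Rightarrow> nat \<Rightarrow> (nat \<Rightarrow> nat set) \<Rightarrow> comb set"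
  for r m n A where
  zero: "(\<lambda>_. 0) \<in> rel_space r m n A"
| gen_A: "\<lbrakk>valid_mat m n a; i \<in> {1..m}; k \<in> {1..n-1}; k \<in> A i; a i k \<ge> r\<rbrakk> \<Longrightarrow>
     basis_vec a - (\<Sum>t = 1..r. scale_comb ((-1) ^ (t - 1) * qbinom (int r) t)
                                   (basis_vec (shift_mat a i k t))) \<in> rel_space r m n A"
| gen_notA: "\<lbrakk>valid_mat m n a; i \<in> {1..m}; k \<in> {1..n-1}; k \<notin> A i; a i k \<ge> 1\<rbrakk> \<Longrightarrow>
     basis_vec a - basis_vec (shift_mat a i k 1) \<in> rel_space r m n A"
| add: "\<lbrakk>f \<in> rel_space r m n A; g \<in> rel_space r m n A\<rbrakk> \<Longrightarrow> f + g \<in> rel_space r m n A"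
| scale: "f \<in> rel_space r m n A \<Longrightarrow> scale_comb c f \<in> rel_space r m n A"

text \<open>Equality to zero in V_{n,m} = formal combinations modulo rel_space.\<close>
definition zero_in_V :: "nat \<Rightarrow> nat \<Rightarrow> nat \<Rightarrow> (nat \<Rightarrow> nat set) \<Rightarrow> comb \<Rightarrow> bool" where
  "zero_in_V r m n A f \<longleftrightarrow> f \<in> rel_space r m n A"

definition edge_mat :: "nat \<Rightarrow> nat \<Rightarrow> nat \<Rightarrow> (nat \<Rightarrow> nat) \<Rightarrow> mat" where
  "edge_mat m n L kk = (\<lambda>i j. if i \<in> {1..m} then
       (if j = 1 then kk i else if j = n then L - kk i else 0) else 0)"

end

theory Submission
  imports Defs "HOL-Library.Poly_Mapping"
begin

abbreviation "qq \<equiv> qvar"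
abbreviation "iq \<equiv> inverse qvar"

lemma qvar_pow: "qvar ^ j = Fract ([:0,1:] ^ j) 1"
  by (induct j) (auto simp: qvar_def One_fract_def)

lemma qvar_ne0: "qvar \<noteq> 0"
  by (simp add: qvar_def Zero_fract_def eq_fract)

lemma qvar_pow_ne1: assumes "k \<ge> 1" shows "qvar ^ k \<noteq> 1"
proof
  assume "qvar ^ k = 1"
  hence "Fract ([:0,1:] ^ k) 1 = Fract (1::rat poly) 1" by (simp add: qvar_pow One_fract_def)
  hence "([:0,1:]::rat poly) ^ k = 1" by (simp add: eq_fract)
  hence "degree (([:0,1:]::rat poly) ^ k) = 0" by simp
  moreover have "degree (([:0,1:]::rat poly) ^ k) = k" by (simp add: degree_power_eq)
  ultimately show False using assms by simp
qed

lemma q_ne_iq: assumes "k \<ge> 1" shows "qvar ^ k \<noteq> iq ^ k"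
proof
  assume h: "qvar ^ k = iq ^ k"
  have "qvar ^ (2*k) = qvar ^ k * qvar ^ k" by (simp add: power_add mult_2)
  also have "\<dots> = qvar ^ k * iq ^ k" using h by simp
  also have "\<dots> = 1" using qvar_ne0 by (simp add: power_mult_distrib[symmetric])
  finally show False using qvar_pow_ne1[of "2*k"] assms by simp
qed

lemma qint_nat: "qint (int n) = (qvar ^ n - iq ^ n) / (qvar - iq)"
  by (simp add: qint_def power_int_minus power_inverse)

lemma qint_nz: "n \<ge> 1 \<Longrightarrow> qint (int n) \<noteq> 0"
  using q_ne_iq[of n] q_ne_iq[of 1] by (simp add: qint_nat)

lemma qint_0: "qint 0 = 0" by (simp add: qint_def)

lemma qfact_Suc: "qfact (Suc k) = qfact k * qint (int (Suc k))"
  by (simp add: qfact_def)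

lemma qfact_nz: "qfact k \<noteq> 0"
  by (induct k) (auto simp: qfact_Suc qint_nz simp del: of_nat_Suc, simp add: qfact_def)

definition ff :: "nat \<Rightarrow> nat \<Rightarrow> qfield" where
  "ff n t = (\<Prod>j<t. qint (int n - int j))"

lemma qbinom_ff: "qbinom (int n) t = ff n t / qfact t"
  by (simp add: qbinom_def ff_def qfact_def)

lemma ff_Suc: "ff n (Suc t) = ff n t * qint (int n - int t)"
  by (simp add: ff_def)

lemma ff_Suc_n: "ff (Suc n) (Suc t) = qint (int (Suc n)) * ff n t"
  unfolding ff_def by (subst prod.lessThan_Suc_shift) simp

lemma ff_zero: "t > n \<Longrightarrow> ff n t = 0"
  unfolding ff_def by (rule prod_zero) (auto intro!: bexI[of _ n] simp: qint_0)

lemma qbinom_zero: "t > n \<Longrightarrow> qbinom (int n) t = 0"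
  by (simp add: qbinom_ff ff_zero)

lemma qbinom_0: "qbinom n 0 = 1" by (simp add: qbinom_def)

lemma ff_fact: "t \<le> n \<Longrightarrow> ff n t * qfact (n - t) = qfact n"
proof (induct t)
  case 0 then show ?case by (simp add: ff_def)
next
  case (Suc t)
  have e: "qfact (n - t) = qfact (n - Suc t) * qint (int n - int t)"
    using Suc.prems qfact_Suc[of "n - Suc t"] by (simp add: Suc_diff_Suc of_nat_diff)
  show ?case using Suc by (simp add: ff_Suc e ac_simps)
qed

lemma qbinom_fact: "t \<le> n \<Longrightarrow> qbinom (int n) t = qfact n / (qfact t * qfact (n - t))"
  using ff_fact[of t n] qfact_nz by (simp add: qbinom_ff field_simps)

lemma qbinom_sym: "t \<le> n \<Longrightarrow> qbinom (int n) (n - t) = qbinom (int n) t"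
  by (simp add: qbinom_fact mult.commute)

lemma qint_pascal: "qint (int (a + t)) = iq ^ t * qint (int a) + qvar ^ a * qint (int t)"
proof -
  have "qvar ^ (a + t) - iq ^ (a + t) = iq ^ t * (qvar ^ a - iq ^ a) + qvar ^ a * (qvar ^ t - iq ^ t)"
    by (simp add: power_add algebra_simps)
  then show ?thesis unfolding qint_nat by (simp add: add_divide_distrib)
qed

lemma qbinom_pascal:
  assumes "1 \<le> t" "t \<le> Suc n"
  shows "qbinom (int (Suc n)) t = iq ^ t * qbinom (int n) t + qvar ^ (Suc n - t) * qbinom (int n) (t - 1)"
proof -
  obtain s where t: "t = Suc s" using assms by (cases t) auto
  have a: "Suc n = (Suc n - t) + t" using assms by simp
  have q: "qint (int (Suc n)) = iq ^ t * qint (int (Suc n - t)) + qvar ^ (Suc n - t) * qint (int t)"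
    by (subst a, rule qint_pascal)
  have i: "int n - int s = int (Suc n - t)" using assms t by simp
  have "qbinom (int (Suc n)) t = qint (int (Suc n)) * ff n s / qfact t"
    by (simp add: qbinom_ff t ff_Suc_n del: of_nat_Suc)
  also have "\<dots> = iq ^ t * (ff n s * qint (int (Suc n - t))) / qfact t
       + qvar ^ (Suc n - t) * ff n s / qfact s"
    using qfact_nz[of s] qint_nz[of t] assms
    by (simp add: q t qfact_Suc field_simps del: of_nat_Suc)
  also have "\<dots> = iq ^ t * qbinom (int n) t + qvar ^ (Suc n - t) * qbinom (int n) (t - 1)"
    by (simp add: qbinom_ff t ff_Suc i)
  finally show ?thesis .
qed

type_synonym R = "mat \<Rightarrow>\<^sub>0 qfield"

definition C :: "qfield \<Rightarrow> R" where "C c = Poly_Mapping.single 0 c"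

lemma C_add: "C (a + b) = C a + C b" by (simp add: C_def single_add)
lemma C_diff: "C (a - b) = C a - C b" by (simp add: C_def single_diff)
lemma C_minus: "C (- a) = - C a" by (simp add: C_def single_uminus)
lemma C_mult: "C (a * b) = C a * C b" by (simp add: C_def mult_single)
lemma C_1: "C 1 = 1" by (simp add: C_def)
lemma C_0: "C 0 = 0" by (simp add: C_def)
lemma C_pow: "C (a ^ k) = C a ^ k" by (induct k) (simp_all add: C_1 C_mult)

definition P :: "nat \<Rightarrow> R \<Rightarrow> R \<Rightarrow> R" where
  "P n x y = (\<Sum>t\<le>n. C ((-1) ^ t * qbinom (int n) t) * x ^ (n - t) * y ^ t)"

lemma qint_1: "qint 1 = 1"
  using qint_nat[of 1] q_ne_iq[of 1] by simp

lemma P_1: "P 1 x y = x - y"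
  by (simp add: P_def qbinom_def qfact_def C_1 C_minus qint_1)

lemma P_0: "P 0 x y = 1"
  by (simp add: P_def qbinom_def C_1)

lemma P_scale2: "P n x (C c * y) = (\<Sum>t\<le>n. C ((-1) ^ t * qbinom (int n) t * c ^ t) * x ^ (n - t) * y ^ t)"
  unfolding P_def by (rule sum.cong) (simp_all add: power_mult_distrib C_mult C_pow ac_simps)

lemma P_rec: "P (Suc n) x y = (x - C (qvar ^ n) * y) * P n x (C iq * y)"
proof -
  define a where "a t = (-1) ^ t * qbinom (int n) t" for t
  have a0: "a (Suc n) = 0" by (simp add: a_def qbinom_zero)
  have P': "P n x (C iq * y) = (\<Sum>t\<le>n. C (a t * iq ^ t) * x ^ (n - t) * y ^ t)"
    by (simp add: P_scale2 a_def)
  have X: "x * P n x (C iq * y) = (\<Sum>t\<le>Suc n. C (a t * iq ^ t) * x ^ (Suc n - t) * y ^ t)"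
  proof -
    have "x * P n x (C iq * y) = (\<Sum>t\<le>n. C (a t * iq ^ t) * x ^ (Suc n - t) * y ^ t)"
      unfolding P' sum_distrib_left
      by (rule sum.cong) (simp_all add: Suc_diff_le ac_simps)
    also have "\<dots> = (\<Sum>t\<le>Suc n. C (a t * iq ^ t) * x ^ (Suc n - t) * y ^ t)"
      by (simp add: a0 C_0)
    finally show ?thesis .
  qed
  define g where "g t = (if t = 0 then 0 else C (a (t - 1) * iq ^ (t - 1) * qvar ^ n) * x ^ (Suc n - t) * y ^ t)" for t
  have Y: "C (qvar ^ n) * y * P n x (C iq * y) = (\<Sum>t\<le>Suc n. g t)"
  proof -
    have "C (qvar ^ n) * y * P n x (C iq * y) = (\<Sum>t\<le>n. g (Suc t))"
      unfolding P' sum_distrib_left g_def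
      by (rule sum.cong) (simp_all add: C_mult ac_simps)
    also have "\<dots> = (\<Sum>t\<le>Suc n. g t)"
      by (subst sum.atMost_Suc_shift) (simp add: g_def)
    finally show ?thesis .
  qed
  have coef: "(-1) ^ t * qbinom (int (Suc n)) t = a t * iq ^ t - (if t = 0 then 0 else a (t - 1) * iq ^ (t - 1) * qvar ^ n)"
    if "t \<le> Suc n" for t
  proof (cases t)
    case 0 then show ?thesis by (simp add: a_def qbinom_0)
  next
    case (Suc s)
    have e: "iq ^ s * qvar ^ n = qvar ^ (Suc n - t)"
    proof -
      have "n = s + (Suc n - t)" using that Suc by simp
      hence "iq ^ s * qvar ^ n = (iq ^ s * qvar ^ s) * qvar ^ (Suc n - t)"
        by (metis power_add mult.assoc)
      also have "iq ^ s * qvar ^ s = 1" using qvar_ne0 by (simp add: power_mult_distrib[symmetric])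
      finally show ?thesis by simp
    qed
    have "qbinom (int (Suc n)) t = iq ^ t * qbinom (int n) t + qvar ^ (Suc n - t) * qbinom (int n) (t - 1)"
      using that Suc by (intro qbinom_pascal) auto
    then show ?thesis using Suc e[symmetric] by (simp add: a_def algebra_simps)
  qed
  have "P (Suc n) x y = (\<Sum>t\<le>Suc n. C (a t * iq ^ t) * x ^ (Suc n - t) * y ^ t - g t)"
    unfolding P_def
  proof (rule sum.cong)
    fix t assume "t \<in> {..Suc n}"
    hence t: "t \<le> Suc n" by simp
    show "C ((-1) ^ t * qbinom (int (Suc n)) t) * x ^ (Suc n - t) * y ^ t = C (a t * iq ^ t) * x ^ (Suc n - t) * y ^ t - g t"
    proof (cases "t = 0")
      case True then show ?thesis by (simp add: g_def a_def qbinom_0)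
    next
      case False
      have h: "C ((-1) ^ t * qbinom (int (Suc n)) t) = C (a t * iq ^ t) - C (a (t - 1) * iq ^ (t - 1) * qvar ^ n)"
        using coef[OF t] False by (simp add: C_diff)
      show ?thesis unfolding h using False by (simp add: g_def algebra_simps)
    qed
  qed simp
  also have "\<dots> = x * P n x (C iq * y) - C (qvar ^ n) * y * P n x (C iq * y)"
    by (simp add: X Y sum_subtractf)
  finally show ?thesis by (simp add: algebra_simps)
qed

lemma P_homog:
  assumes "c \<noteq> 0"
  shows "P u (C c * a) b = C (c ^ u) * P u a (C (inverse c) * b)"
  unfolding P_scale2 unfolding P_def sum_distrib_left
proof (rule sum.cong)
  fix t assume "t \<in> {..u}"
  hence "c ^ u = c ^ (u - t) * c ^ t" by (simp add: power_add[symmetric])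
  hence "c ^ u * inverse c ^ t = c ^ (u - t)" using assms
    by (simp add: field_simps)
  hence e: "C (c ^ (u - t)) = C (c ^ u) * C (inverse c ^ t)" by (simp add: C_mult[symmetric])
  then show "C ((- 1) ^ t * qbinom (int u) t) * (C c * a) ^ (u - t) * b ^ t =
         C (c ^ u) * (C ((- 1) ^ t * qbinom (int u) t * inverse c ^ t) * a ^ (u - t) * b ^ t)"
    by (simp add: power_mult_distrib C_mult C_pow[symmetric] e ac_simps)
qed simp

lemma P_sym: "P n y x = C ((-1) ^ n) * P n x y"
proof -
  have "P n y x = (\<Sum>t\<le>n. C ((-1) ^ (n - t) * qbinom (int n) (n - t)) * y ^ (n - (n - t)) * x ^ (n - t))"
    unfolding P_def
    by (rule sum.reindex_bij_witness[where i="\<lambda>i. n - i" and j="\<lambda>i. n - i"]) auto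
  also have "\<dots> = (\<Sum>t\<le>n. C ((-1) ^ n) * (C ((-1) ^ t * qbinom (int n) t) * x ^ (n - t) * y ^ t))"
  proof (rule sum.cong)
    fix t assume "t \<in> {..n}"
    hence t: "t \<le> n" by simp
    have "(-1::qfield) ^ (n - t) = (-1) ^ n * (-1) ^ t"
    proof -
      have "(-1::qfield) ^ n = (-1) ^ (n - t) * (-1) ^ t" using t by (simp add: power_add[symmetric])
      hence "(-1::qfield) ^ n * (-1) ^ t = (-1) ^ (n - t) * ((-1) ^ t * (-1) ^ t)" by simp
      also have "(-1::qfield) ^ t * (-1) ^ t = 1" by (simp add: power_mult_distrib[symmetric])
      finally show ?thesis by simp
    qed
    then show "C ((- 1) ^ (n - t) * qbinom (int n) (n - t)) * y ^ (n - (n - t)) * x ^ (n - t) =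
         C ((- 1) ^ n) * (C ((- 1) ^ t * qbinom (int n) t) * x ^ (n - t) * y ^ t)"
      using t by (simp add: qbinom_sym C_mult ac_simps)
  qed simp
  finally show ?thesis by (simp add: P_def sum_distrib_left)
qed

definition is_ideal :: "R set \<Rightarrow> bool" where
  "is_ideal I \<longleftrightarrow> 0 \<in> I \<and> (\<forall>a\<in>I. \<forall>b\<in>I. a + b \<in> I) \<and> (\<forall>a\<in>I. \<forall>c. c * a \<in> I)"

lemma ideal_0: "is_ideal I \<Longrightarrow> 0 \<in> I" by (simp add: is_ideal_def)
lemma ideal_add: "is_ideal I \<Longrightarrow> a \<in> I \<Longrightarrow> b \<in> I \<Longrightarrow> a + b \<in> I" by (simp add: is_ideal_def)
lemma ideal_mult: "is_ideal I \<Longrightarrow> a \<in> I \<Longrightarrow> c * a \<in> I" by (simp add: is_ideal_def)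
lemma ideal_mult_r: "is_ideal I \<Longrightarrow> a \<in> I \<Longrightarrow> a * c \<in> I" by (metis ideal_mult mult.commute)
lemma ideal_diff: "is_ideal I \<Longrightarrow> a \<in> I \<Longrightarrow> b \<in> I \<Longrightarrow> a - b \<in> I"
  using ideal_add[of I a "(-1) * b"] ideal_mult[of I b "-1"] by simp
lemma ideal_sum: "is_ideal I \<Longrightarrow> (\<And>t. t \<in> S \<Longrightarrow> f t \<in> I) \<Longrightarrow> sum f S \<in> I"
  by (induct S rule: infinite_finite_induct) (auto simp: ideal_0 ideal_add)

lemma ideal_quot: "is_ideal I \<Longrightarrow> is_ideal {f. l * f \<in> I}"
  unfolding is_ideal_def by (auto simp: distrib_left) (metis mult.left_commute)
lemma ideal_quot_sub: "is_ideal I \<Longrightarrow> a \<in> I \<Longrightarrow> a \<in> {f. l * f \<in> I}"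
  by (simp add: ideal_mult)

lemma pow_diff_in: assumes "is_ideal I" "a - b \<in> I" shows "a ^ k - b ^ k \<in> I"
proof (cases k)
  case 0 then show ?thesis using assms by (simp add: ideal_0)
next
  case (Suc j) then show ?thesis using assms
    by (simp only: diff_power_eq_sum) (rule ideal_mult_r)
qed

lemma base1: assumes "is_ideal I" "x - y \<in> I" shows "P u x z - P u y z \<in> I"
proof -
  have "P u x z - P u y z = (\<Sum>t\<le>u. (C ((-1) ^ t * qbinom (int u) t) * z ^ t) * (x ^ (u - t) - y ^ (u - t)))"
    unfolding P_def sum_subtractf[symmetric] by (rule sum.cong) (simp_all add: algebra_simps)
  also have "\<dots> \<in> I" using assms by (intro ideal_sum ideal_mult pow_diff_in)
  finally show ?thesis .
qed

lemma base2: assumes "is_ideal I" "y - z \<in> I" shows "P u x y - P u x z \<in> I"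
proof -
  have "P u x y - P u x z = (\<Sum>t\<le>u. (C ((-1) ^ t * qbinom (int u) t) * x ^ (u - t)) * (y ^ t - z ^ t))"
    unfolding P_def sum_subtractf[symmetric] by (rule sum.cong) (simp_all add: algebra_simps)
  also have "\<dots> \<in> I" using assms by (intro ideal_sum ideal_mult pow_diff_in)
  finally show ?thesis .
qed

lemma C_q_iq: "C qvar * C iq = 1"
  using qvar_ne0 by (simp add: C_mult[symmetric] C_1)

lemma J: "is_ideal I \<Longrightarrow> P (Suc s) x y \<in> I \<Longrightarrow> P (Suc u) y z \<in> I \<Longrightarrow> P (Suc (s + u)) x z \<in> I"
proof (induct s arbitrary: u x y z I)
  case 0
  have "P (Suc u) x z = (P (Suc u) x z - P (Suc u) y z) + P (Suc u) y z" by simp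
  also have "\<dots> \<in> I" using 0 by (intro ideal_add base1) (auto simp: P_1[simplified])
  finally show ?case by simp
next
  case (Suc s')
  note outer = Suc.hyps
  show ?case using Suc.prems
  proof (induct u arbitrary: x y z I)
    case 0
    have d: "P (Suc (Suc s')) x y - P (Suc (Suc s')) x z \<in> I"
      using 0 by (intro base2) (simp_all add: P_1[simplified])
    from ideal_diff[OF 0(1) 0(2) d] show ?case by simp
  next
    case (Suc u')
    note inner = Suc.hyps
    have I: "is_ideal I" by fact
    define l1 where "l1 = x - C (qvar ^ Suc s') * y"
    define l2 where "l2 = y - C (qvar ^ Suc u') * z"
    let ?I1 = "{f. l1 * f \<in> I}" and ?I2 = "{f. l2 * f \<in> I}"
    have I1: "is_ideal ?I1" and I2: "is_ideal ?I2" using I by (simp_all add: ideal_quot)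
    have Px: "P (Suc (Suc s')) x y = l1 * P (Suc s') x (C iq * y)"
      unfolding l1_def by (rule P_rec)
    have Py: "P (Suc (Suc u')) y z = l2 * P (Suc u') y (C iq * z)"
      unfolding l2_def by (rule P_rec)
    have a1: "P (Suc s') x (C iq * y) \<in> ?I1" using Suc.prems(2) Px by simp
    have yy: "y = C qvar * (C iq * y)" by (simp add: C_q_iq mult.assoc[symmetric])
    have hh: "P (Suc (Suc u')) y z = C (qvar ^ Suc (Suc u')) * P (Suc (Suc u')) (C iq * y) (C iq * z)"
      by (subst yy, subst P_homog) (simp_all add: qvar_ne0)
    have cc: "C (iq ^ Suc (Suc u')) * C (qvar ^ Suc (Suc u')) = 1"
      using qvar_ne0 by (simp only: C_mult[symmetric] power_mult_distrib[symmetric]) (simp add: C_1)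
    have "C (iq ^ Suc (Suc u')) * P (Suc (Suc u')) y z
       = (C (iq ^ Suc (Suc u')) * C (qvar ^ Suc (Suc u'))) * P (Suc (Suc u')) (C iq * y) (C iq * z)"
      unfolding hh by (simp only: mult.assoc)
    hence "P (Suc (Suc u')) (C iq * y) (C iq * z) = C (iq ^ Suc (Suc u')) * P (Suc (Suc u')) y z"
      unfolding cc by simp
    hence b1: "P (Suc (Suc u')) (C iq * y) (C iq * z) \<in> ?I1"
      using Suc.prems(3) I by (simp add: ideal_mult ideal_quot_sub)
    have r1: "P (Suc (s' + Suc u')) x (C iq * z) \<in> ?I1"
      by (rule outer[OF I1 a1 b1])
    have a2: "P (Suc (Suc s')) x y \<in> ?I2" using Suc.prems(2) I by (simp add: ideal_mult)
    have b2: "P (Suc u') y (C iq * z) \<in> ?I2" using Suc.prems(3) Py by simp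
    have r2: "P (Suc (Suc s' + u')) x (C iq * z) \<in> ?I2"
      by (rule inner[OF I2 a2 b2])
    define m where "m = Suc (s' + Suc u')"
    have "P (Suc m) x z = (x - C (qvar ^ m) * z) * P m x (C iq * z)" by (rule P_rec)
    also have "x - C (qvar ^ m) * z = l1 + C (qvar ^ Suc s') * l2"
      by (simp add: l1_def l2_def m_def C_mult[symmetric] power_add[symmetric] algebra_simps)
    also have "(l1 + C (qvar ^ Suc s') * l2) * P m x (C iq * z)
       = l1 * P m x (C iq * z) + C (qvar ^ Suc s') * (l2 * P m x (C iq * z))"
      by (simp add: algebra_simps)
    also have "\<dots> \<in> I"
    proof -
      have s1: "l1 * P m x (C iq * z) \<in> I" using r1 by (simp add: m_def)
      have s2: "l2 * P m x (C iq * z) \<in> I" using r2 by (simp add: m_def)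
      show ?thesis by (rule ideal_add[OF I s1 ideal_mult[OF I s2]])
    qed
    finally show ?case by (simp add: m_def)
  qed
qed

lemma chain:
  fixes X :: "nat \<Rightarrow> R"
  assumes I: "is_ideal I" and r: "r \<ge> 1" and A: "B \<subseteq> {1..n-1}"
    and gA: "\<And>k. k \<in> B \<Longrightarrow> P r (X k) (X (Suc k)) \<in> I"
    and gN: "\<And>k. 1 \<le> k \<Longrightarrow> k \<le> n - 1 \<Longrightarrow> k \<notin> B \<Longrightarrow> X k - X (Suc k) \<in> I"
  shows "1 \<le> j \<Longrightarrow> j \<le> n \<Longrightarrow> P (Suc (card (B \<inter> {..<j}) * (r - 1))) (X 1) (X j) \<in> I"
proof (induct j)
  case 0 then show ?case by simp
next
  case (Suc j)
  show ?case
  proof (cases "j = 0")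
    case True
    have "B \<inter> {..<Suc 0} = {}" using A by auto
    then show ?thesis using True I by (simp add: P_1[simplified] ideal_0)
  next
    case False
    hence j: "1 \<le> j" "j \<le> n" "j \<le> n - 1" using Suc.prems by auto
    have IH: "P (Suc (card (B \<inter> {..<j}) * (r - 1))) (X 1) (X j) \<in> I" using Suc.hyps j by simp
    have fin: "finite (B \<inter> {..<j})" by simp
    show ?thesis
    proof (cases "j \<in> B")
      case True
      have c: "card (B \<inter> {..<Suc j}) = Suc (card (B \<inter> {..<j}))"
      proof -
        have "B \<inter> {..<Suc j} = insert j (B \<inter> {..<j})" using True by auto
        thus ?thesis using fin by simp
      qed
      have g: "P (Suc (r - 1)) (X j) (X (Suc j)) \<in> I" using gA[OF True] r by simp
      have "P (Suc (card (B \<inter> {..<j}) * (r - 1) + (r - 1))) (X 1) (X (Suc j)) \<in> I"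
        by (rule J[OF I IH g])
      then show ?thesis by (simp add: c add.commute)
    next
      case False
      have c: "B \<inter> {..<Suc j} = B \<inter> {..<j}" using False by (auto simp: less_Suc_eq)
      have g: "P (Suc 0) (X j) (X (Suc j)) \<in> I" using gN[OF j(1) j(3) False] by (simp add: P_1[simplified])
      have "P (Suc (card (B \<inter> {..<j}) * (r - 1) + 0)) (X 1) (X (Suc j)) \<in> I"
        by (rule J[OF I IH g])
      then show ?thesis by (simp add: c)
    qed
  qed
qed

definition Phi :: "nat \<Rightarrow> nat \<Rightarrow> R \<Rightarrow> comb" where
  "Phi m n p = (\<lambda>b. if valid_mat m n b then Poly_Mapping.lookup p b else 0)"

definition transl :: "mat \<Rightarrow> comb \<Rightarrow> comb" where
  "transl v f = (\<lambda>b. if v \<le> b then f (b - v) else 0)"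

lemma mat_eq_add: "(b = v + q) \<longleftrightarrow> (v \<le> b \<and> q = b - v)" for b v q :: mat
  by (auto simp: fun_eq_iff le_fun_def)

lemma mat_eq_add': "(b = q + v) \<longleftrightarrow> (v \<le> b \<and> q = b - v)" for b v q :: mat
  using mat_eq_add[of b v q] by (simp add: add.commute)

lemma transl_basis: "transl v (basis_vec a) = basis_vec (a + v)"
  unfolding transl_def basis_vec_def
  by (rule ext) (auto simp: mat_eq_add')

lemma transl_add: "transl v (f + g) = transl v f + transl v g"
  by (auto simp: transl_def fun_eq_iff)
lemma transl_diff: "transl v (f - g) = transl v f - transl v g"
  by (auto simp: transl_def fun_eq_iff)
lemma transl_scale: "transl v (scale_comb c f) = scale_comb c (transl v f)"
  by (auto simp: transl_def scale_comb_def fun_eq_iff)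
lemma transl_zero: "transl v (\<lambda>_. 0) = (\<lambda>_. 0)"
  by (auto simp: transl_def fun_eq_iff)
lemma transl_sum: "transl v (sum f S) = (\<Sum>t\<in>S. transl v (f t))"
proof (induct S rule: infinite_finite_induct)
  case (infinite A) then show ?case by (simp add: transl_def zero_fun_def)
next
  case empty then show ?case by (simp add: transl_def zero_fun_def)
next
  case (insert x F)
  have "transl v (sum f (insert x F)) = transl v (f x + sum f F)" using insert(1,2) by simp
  also have "\<dots> = transl v (f x) + transl v (sum f F)" by (rule transl_add)
  also have "\<dots> = (\<Sum>t\<in>insert x F. transl v (f t))" using insert by simp
  finally show ?case .
qed

lemma shift_add: "t \<le> a i k \<Longrightarrow> shift_mat a i k t + v = shift_mat (a + v) i k t"
  by (auto simp: shift_mat_def fun_eq_iff)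

lemma valid_add: "valid_mat m n a \<Longrightarrow> valid_mat m n v \<Longrightarrow> valid_mat m n (a + v)"
  by (simp add: valid_mat_def)

lemma rel_transl:
  assumes "f \<in> rel_space r m n A" "valid_mat m n v"
  shows "transl v f \<in> rel_space r m n A"
  using assms(1)
proof induct
  case zero then show ?case by (simp add: transl_zero rel_space.zero)
next
  case (gen_A a i k)
  have e: "transl v (scale_comb ((-1) ^ (t - 1) * qbinom (int r) t) (basis_vec (shift_mat a i k t)))
      = scale_comb ((-1) ^ (t - 1) * qbinom (int r) t) (basis_vec (shift_mat (a + v) i k t))"
    if "t \<in> {1..r}" for t
  proof -
    have "t \<le> a i k" using that gen_A(5) by simp
    then show ?thesis by (simp only: transl_scale transl_basis shift_add)
  qed
  have "transl v (basis_vec a - (\<Sum>t = 1..r. scale_comb ((-1) ^ (t - 1) * qbinom (int r) t)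
                                   (basis_vec (shift_mat a i k t))))
     = basis_vec (a + v) - (\<Sum>t = 1..r. transl v (scale_comb ((-1) ^ (t - 1) * qbinom (int r) t)
                                   (basis_vec (shift_mat a i k t))))"
    by (simp only: transl_diff transl_sum transl_basis)
  also have "\<dots> = basis_vec (a + v) - (\<Sum>t = 1..r. scale_comb ((-1) ^ (t - 1) * qbinom (int r) t)
                                   (basis_vec (shift_mat (a + v) i k t)))"
    by (rule arg_cong[where f="\<lambda>s. basis_vec (a + v) - s"], rule sum.cong[OF refl], rule e)
  also have "\<dots> \<in> rel_space r m n A"
    using gen_A assms(2) by (intro rel_space.gen_A) (auto simp: valid_add)
  finally show ?case .
next
  case (gen_notA a i k)
  have "transl v (basis_vec a - basis_vec (shift_mat a i k 1))
     = basis_vec (a + v) - basis_vec (shift_mat (a + v) i k 1)"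
    unfolding transl_diff transl_basis using gen_notA by (simp add: shift_add)
  also have "\<dots> \<in> rel_space r m n A"
    using gen_notA assms(2) by (intro rel_space.gen_notA) (auto simp: valid_add)
  finally show ?case .
next
  case (add f g) show ?case unfolding transl_add by (rule rel_space.add[OF add(2) add(4)])
next
  case (scale f c) show ?case unfolding transl_scale by (rule rel_space.scale[OF scale(2)])
qed

lemma lookup_single_mult: fixes p :: R shows "Poly_Mapping.lookup (Poly_Mapping.single v c * p) b = (if v \<le> b then c * Poly_Mapping.lookup p (b - v) else 0)"
proof -
  have "Poly_Mapping.lookup (Poly_Mapping.single v c * p) b = Sum_any (\<lambda>l. (c when v = l) * Sum_any (\<lambda>q. Poly_Mapping.lookup p q when b = l + q))"
    by (simp add: lookup_mult lookup_single)
  also have "\<dots> = Sum_any (\<lambda>l. (c * Sum_any (\<lambda>q. Poly_Mapping.lookup p q when b = l + q)) when v = l)"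
    by (simp add: when_mult)
  also have "\<dots> = c * Sum_any (\<lambda>q. Poly_Mapping.lookup p q when b = v + q)" by simp
  also have "Sum_any (\<lambda>q. Poly_Mapping.lookup p q when b = v + q) = (if v \<le> b then Poly_Mapping.lookup p (b - v) else 0)"
  proof (cases "v \<le> b")
    case True
    have "(\<lambda>q. Poly_Mapping.lookup p q when b = v + q) = (\<lambda>q. Poly_Mapping.lookup p q when q = b - v)"
    proof -
      have eq: "\<And>q. (b = v + q) = (q = b - v)" using True mat_eq_add by blast
      show ?thesis by (intro ext) (simp only: eq)
    qed
    then show ?thesis using True by (simp only: Sum_any_when_equal if_True)
  next
    case False
    have "(\<lambda>q. Poly_Mapping.lookup p q when b = v + q) = (\<lambda>q. 0)"
    proof -
      have eq: "\<And>q. (b = v + q) = False" using False mat_eq_add by blast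
      show ?thesis by (intro ext) (simp only: eq when_simps)
    qed
    then show ?thesis using False by (simp only: Sum_any.neutral if_False)
  qed
  hence "c * Sum_any (\<lambda>q. Poly_Mapping.lookup p q when b = v + q) = (if v \<le> b then c * Poly_Mapping.lookup p (b - v) else 0)"
    by simp
  finally show ?thesis .
qed

lemma valid_le: "valid_mat m n b \<Longrightarrow> v \<le> b \<Longrightarrow> valid_mat m n v"
  unfolding valid_mat_def le_fun_def by (metis le_zero_eq)

lemma valid_sub: "valid_mat m n b \<Longrightarrow> valid_mat m n (b - v)"
  unfolding valid_mat_def by simp

lemma valid_sub_add: "v \<le> b \<Longrightarrow> valid_mat m n (b - v) \<Longrightarrow> valid_mat m n v \<Longrightarrow> valid_mat m n b"
proof -
  assume "v \<le> b" "valid_mat m n (b - v)" "valid_mat m n v"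
  moreover have "b = (b - v) + v" using \<open>v \<le> b\<close> by (auto simp: fun_eq_iff le_fun_def)
  ultimately show ?thesis by (metis valid_add)
qed

lemma Phi_single_mult:
  "Phi m n (Poly_Mapping.single v c * p) = (if valid_mat m n v then scale_comb c (transl v (Phi m n p)) else (\<lambda>_. 0))"
proof (cases "valid_mat m n v")
  case True
  show ?thesis using True
    by (auto simp: fun_eq_iff Phi_def transl_def scale_comb_def lookup_single_mult
      intro: valid_sub dest: valid_sub_add)
next
  case False
  show ?thesis using False
    by (auto simp: fun_eq_iff Phi_def lookup_single_mult dest: valid_le)
qed

lemma Phi_add: "Phi m n (p + q) = Phi m n p + Phi m n q"
  by (auto simp: Phi_def fun_eq_iff lookup_add)
lemma Phi_zero: "Phi m n 0 = (\<lambda>_. 0)"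
  by (auto simp: Phi_def fun_eq_iff)
lemma Phi_sum: "Phi m n (sum f S) = (\<Sum>t\<in>S. Phi m n (f t))"
  by (induct S rule: infinite_finite_induct) (auto simp: Phi_add Phi_zero[unfolded zero_fun_def[symmetric]])
lemma Phi_diff: "Phi m n (p - q) = Phi m n p - Phi m n q"
  by (auto simp: Phi_def fun_eq_iff lookup_minus)

lemma rel_sum: "(\<And>t. t \<in> S \<Longrightarrow> f t \<in> rel_space r m n A) \<Longrightarrow> sum f S \<in> rel_space r m n A"
  by (induct S rule: infinite_finite_induct)
     (auto intro: rel_space.add rel_space.zero[unfolded zero_fun_def[symmetric]])

lemma poly_decomp: "c = (\<Sum>v\<in>Poly_Mapping.keys c. Poly_Mapping.single v (Poly_Mapping.lookup c v))"
  by (rule poly_mapping_eqI)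
     (auto simp: lookup_sum lookup_single when_def in_keys_iff sum.delta' cong: if_cong)

lemma ideal_rel: "is_ideal {p. Phi m n p \<in> rel_space r m n A}"
  unfolding is_ideal_def
proof (intro conjI ballI allI; simp)
  show "Phi m n 0 \<in> rel_space r m n A" by (simp add: Phi_zero rel_space.zero)
next
  fix a b assume "Phi m n a \<in> rel_space r m n A" "Phi m n b \<in> rel_space r m n A"
  then show "Phi m n (a + b) \<in> rel_space r m n A" by (simp add: Phi_add rel_space.add)
next
  fix a c assume a: "Phi m n a \<in> rel_space r m n A"
  have "c * a = (\<Sum>v\<in>Poly_Mapping.keys c. Poly_Mapping.single v (Poly_Mapping.lookup c v) * a)"
    by (subst poly_decomp[of c]) (simp add: sum_distrib_right)
  hence "Phi m n (c * a) = (\<Sum>v\<in>Poly_Mapping.keys c. Phi m n (Poly_Mapping.single v (Poly_Mapping.lookup c v) * a))"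
    by (simp add: Phi_sum)
  also have "\<dots> \<in> rel_space r m n A"
    using a by (intro rel_sum) (auto simp: Phi_single_mult intro: rel_space.scale rel_transl rel_space.zero)
  finally show "Phi m n (c * a) \<in> rel_space r m n A" .
qed

definition Ep :: "nat \<Rightarrow> nat \<Rightarrow> nat \<Rightarrow> mat" where
  "Ep i k p = (\<lambda>i' k'. if i' = i \<and> k' = k then p else 0)"

definition X :: "nat \<Rightarrow> nat \<Rightarrow> R" where
  "X i k = Poly_Mapping.single (Ep i k 1) 1"

lemma Ep_0: "Ep i k 0 = 0" by (simp add: Ep_def fun_eq_iff)
lemma Ep_add: "Ep i k a + Ep i k b = Ep i k (a + b)" by (simp add: Ep_def fun_eq_iff)

lemma X_pow: "X i k ^ p = Poly_Mapping.single (Ep i k p) 1"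
proof (induct p)
  case 0 then show ?case by (simp only: power_0 Ep_0 single_one)
next
  case (Suc p) then show ?case by (simp add: X_def mult_single Ep_add)
qed

lemma valid_Ep: "1 \<le> i \<Longrightarrow> i \<le> m \<Longrightarrow> 1 \<le> k \<Longrightarrow> k \<le> n \<Longrightarrow> valid_mat m n (Ep i k p)"
  by (auto simp: valid_mat_def Ep_def)

lemma Phi_single: "valid_mat m n w \<Longrightarrow> Phi m n (Poly_Mapping.single w c) = scale_comb c (basis_vec w)"
  by (intro ext) (auto simp: Phi_def scale_comb_def basis_vec_def lookup_single when_def)

lemma term_single: "C c * X i k ^ a * X i' k' ^ b = Poly_Mapping.single (Ep i k a + Ep i' k' b) c"
  by (simp add: C_def X_pow mult_single)

lemma scale_neg: "scale_comb (- c) f = - scale_comb c f"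
  by (simp add: scale_comb_def fun_eq_iff)

lemma sum_mat_apply: "(sum f S :: mat) a b = (\<Sum>i\<in>S. f i a b)"
  by (induct S rule: infinite_finite_induct) auto

lemma prod_single: "(\<Prod>i\<in>S. Poly_Mapping.single (w i) (d i) :: R) = Poly_Mapping.single (\<Sum>i\<in>S. w i) (\<Prod>i\<in>S. d i)"
proof (induct S rule: infinite_finite_induct)
  case (infinite S)
  have "(\<Prod>i\<in>S. Poly_Mapping.single (w i) (d i) :: R) = 1" "sum w S = 0" "prod d S = 1"
    using infinite by simp_all
  then show ?case by (simp only: single_one)
next
  case empty then show ?case by (simp only: prod.empty sum.empty single_one)
next
  case (insert x F)
  have "(\<Prod>i\<in>insert x F. Poly_Mapping.single (w i) (d i) :: R) = Poly_Mapping.single (w x) (d x) * (\<Prod>i\<in>F. Poly_Mapping.single (w i) (d i))"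
    using insert(1,2) by (rule prod.insert)
  also have "\<dots> = Poly_Mapping.single (w x + sum w F) (d x * prod d F)"
    by (simp only: insert(3) mult_single)
  also have "\<dots> = Poly_Mapping.single (sum w (insert x F)) (prod d (insert x F))"
    by (simp only: sum.insert[OF insert(1,2)] prod.insert[OF insert(1,2)])
  finally show ?case .
qed

lemma gen_A_mem:
  assumes "m \<ge> 1" "1 \<le> k" "k \<le> n - 1" "k \<in> A 1" "r \<ge> 1"
  shows "Phi m n (P r (X 1 k) (X 1 (Suc k))) \<in> rel_space r m n A"
proof -
  define w where "w t = Ep 1 k (r - t) + Ep 1 (Suc k) t" for t
  have vw: "valid_mat m n (w t)" for t
    unfolding w_def using assms by (intro valid_add valid_Ep) auto
  have sh: "shift_mat (Ep 1 k r) 1 k t = w t" for t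
    by (auto simp: shift_mat_def w_def Ep_def fun_eq_iff)
  have w0: "w 0 = Ep 1 k r" by (simp add: w_def Ep_0)
  have "Phi m n (P r (X 1 k) (X 1 (Suc k))) = (\<Sum>t\<le>r. scale_comb ((-1) ^ t * qbinom (int r) t) (basis_vec (w t)))"
    unfolding P_def Phi_sum term_single w_def[symmetric] using vw by (simp add: Phi_single)
  also have "\<dots> = scale_comb ((-1) ^ 0 * qbinom (int r) 0) (basis_vec (w 0)) +
       (\<Sum>t=1..r. scale_comb ((-1) ^ t * qbinom (int r) t) (basis_vec (w t)))"
  proof -
    have "{..r} = insert 0 {1..r}" by auto
    then show ?thesis by simp
  qed
  also have "\<dots> = basis_vec (Ep 1 k r) - (\<Sum>t=1..r. scale_comb ((-1) ^ (t - 1) * qbinom (int r) t)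
                                   (basis_vec (shift_mat (Ep 1 k r) 1 k t)))"
  proof -
    have "scale_comb ((-1) ^ t * qbinom (int r) t) (basis_vec (w t)) =
          - scale_comb ((-1) ^ (t - 1) * qbinom (int r) t) (basis_vec (shift_mat (Ep 1 k r) 1 k t))"
      if "t \<in> {1..r}" for t
    proof -
      have "(-1::qfield) ^ t = - ((-1) ^ (t - 1))" using that by (cases t) auto
      then show ?thesis unfolding sh by (simp add: scale_neg[symmetric])
    qed
    hence "(\<Sum>t=1..r. scale_comb ((-1) ^ t * qbinom (int r) t) (basis_vec (w t))) =
       - (\<Sum>t=1..r. scale_comb ((-1) ^ (t - 1) * qbinom (int r) t) (basis_vec (shift_mat (Ep 1 k r) 1 k t)))"
      by (simp add: sum_negf)
    moreover have "scale_comb ((-1) ^ 0 * qbinom (int r) 0) (basis_vec (w 0)) = basis_vec (Ep 1 k r)"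
      by (simp add: qbinom_0 scale_comb_def w0)
    ultimately show ?thesis by simp
  qed
  also have "\<dots> \<in> rel_space r m n A"
    using assms by (intro rel_space.gen_A valid_Ep) (auto simp: Ep_def)
  finally show ?thesis .
qed

lemma gen_N_mem:
  assumes "m \<ge> 1" "1 \<le> k" "k \<le> n - 1" "k \<notin> A 1"
  shows "Phi m n (X 1 k - X 1 (Suc k)) \<in> rel_space r m n A"
proof -
  have sh: "shift_mat (Ep 1 k 1) 1 k 1 = Ep 1 (Suc k) 1"
    by (auto simp: shift_mat_def Ep_def fun_eq_iff)
  have "Phi m n (X 1 k - X 1 (Suc k)) = basis_vec (Ep 1 k 1) - basis_vec (shift_mat (Ep 1 k 1) 1 k 1)"
    unfolding Phi_diff X_def sh using assms
    by (subst (1 2) Phi_single) (auto intro: valid_Ep simp: scale_comb_def)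
  also have "\<dots> \<in> rel_space r m n A"
    using assms by (intro rel_space.gen_notA valid_Ep) (auto simp: Ep_def)
  finally show ?thesis .
qed

theorem proposition5p18:
  fixes r m n N :: nat and A :: "nat \<Rightarrow> nat set"
  assumes "r \<ge> 2" "m \<ge> 1" "n \<ge> 2" "1 \<le> N" "N \<le> n"
    and "\<And>i. i \<in> {1..m} \<Longrightarrow> A i \<subseteq> {1..n-1} \<and> card (A i) = N - 1"
  shows "zero_in_V r m n A
     (let L = (N - 1) * (r - 1) + 1 in
      \<Sum>kk \<in> PiE {1..m} (\<lambda>_. {0..L}).
         scale_comb ((-1) ^ (\<Sum>i = 1..m. kk i) * (\<Prod>i = 1..m. qbinom (int L) (kk i)))
                    (basis_vec (edge_mat m n L kk)))"
proof -
  define L where "L = (N - 1) * (r - 1) + 1"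
  define I where "I = {p. Phi m n p \<in> rel_space r m n A}"
  have I: "is_ideal I" unfolding I_def by (rule ideal_rel)
  have A1: "A 1 \<subseteq> {1..n-1}" "card (A 1) = N - 1" using assms(6)[of 1] assms(2) by auto
  have ch: "P (Suc (card (A 1 \<inter> {..<n}) * (r - 1))) (X 1 1) (X 1 n) \<in> I"
  proof (rule chain[OF I _ A1(1)])
    show "1 \<le> r" using assms by simp
    show "P r (X 1 k) (X 1 (Suc k)) \<in> I" if "k \<in> A 1" for k
    proof -
      have "k \<in> {1..n-1}" using that A1(1) by blast
      then show ?thesis unfolding I_def using that assms by (intro CollectI gen_A_mem) auto
    qed
    show "X 1 k - X 1 (Suc k) \<in> I" if "1 \<le> k" "k \<le> n - 1" "k \<notin> A 1" for k
      unfolding I_def using that assms by (intro CollectI gen_N_mem) auto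
  qed (use assms in auto)
  have "A 1 \<inter> {..<n} = A 1"
  proof -
    have "A 1 \<subseteq> {..<n}" using A1(1) assms(3) by fastforce
    then show ?thesis by blast
  qed
  hence "P L (X 1 1) (X 1 n) \<in> I" using ch A1 by (simp add: L_def)
  hence F1: "P L (X 1 n) (X 1 1) \<in> I" by (subst P_sym) (rule ideal_mult[OF I])
  have fin: "finite {2..m}" by simp
  have "{1..m} = insert 1 {2..m}" using assms by auto
  hence prodI: "(\<Prod>i\<in>{1..m}. P L (X i n) (X i 1)) \<in> I"
    using F1 I by (simp add: ideal_mult_r)
  define cf where "cf t = (-1) ^ t * qbinom (int L) t" for t
  have Pi: "P L (X i n) (X i 1) = (\<Sum>t\<in>{0..L}. Poly_Mapping.single (Ep i n (L - t) + Ep i 1 t) (cf t))" for i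
    unfolding P_def cf_def atMost_atLeast0 by (simp add: term_single)
  have edge: "(\<Sum>i\<in>{1..m}. Ep i n (L - kk i) + Ep i 1 (kk i)) = edge_mat m n L kk" for kk
  proof (intro ext)
    fix a b
    show "(\<Sum>i\<in>{1..m}. Ep i n (L - kk i) + Ep i 1 (kk i)) a b = edge_mat m n L kk a b"
    proof -
      have h: "(Ep i n (L - kk i) + Ep i 1 (kk i)) a b =
          (if i = a then (if b = n then L - kk a else 0) + (if b = 1 then kk a else 0) else 0)" for i
        by (simp add: Ep_def)
      have "(\<Sum>i\<in>{1..m}. Ep i n (L - kk i) + Ep i 1 (kk i)) a b =
          (\<Sum>i\<in>{1..m}. (if i = a then (if b = n then L - kk a else 0) + (if b = 1 then kk a else 0) else 0))"
        unfolding sum_mat_apply h ..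
      also have "\<dots> = (if a \<in> {1..m} then (if b = n then L - kk a else 0) + (if b = 1 then kk a else 0) else 0)"
        by (rule sum.delta[OF finite_atLeastAtMost])
      also have "\<dots> = edge_mat m n L kk a b"
        using assms(3) by (simp add: edge_mat_def)
      finally show ?thesis .
    qed
  qed
  have "(\<Prod>i\<in>{1..m}. P L (X i n) (X i 1)) =
     (\<Sum>kk\<in>PiE {1..m} (\<lambda>_. {0..L}). \<Prod>i\<in>{1..m}. Poly_Mapping.single (Ep i n (L - kk i) + Ep i 1 (kk i)) (cf (kk i)))"
    unfolding Pi by (rule prod_sum_PiE) auto
  also have "\<dots> = (\<Sum>kk\<in>PiE {1..m} (\<lambda>_. {0..L}). Poly_Mapping.single (edge_mat m n L kk)
        ((-1) ^ (\<Sum>i = 1..m. kk i) * (\<Prod>i = 1..m. qbinom (int L) (kk i))))"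
    by (rule sum.cong[OF refl]) (simp only: prod_single edge, simp add: cf_def prod.distrib power_sum)
  finally have ex: "(\<Prod>i\<in>{1..m}. P L (X i n) (X i 1)) = \<dots>" .
  have valid_edge: "valid_mat m n (edge_mat m n L kk)" for kk
    using assms by (auto simp: valid_mat_def edge_mat_def)
  have "Phi m n (\<Prod>i\<in>{1..m}. P L (X i n) (X i 1)) =
     (\<Sum>kk \<in> PiE {1..m} (\<lambda>_. {0..L}).
         scale_comb ((-1) ^ (\<Sum>i = 1..m. kk i) * (\<Prod>i = 1..m. qbinom (int L) (kk i)))
                    (basis_vec (edge_mat m n L kk)))"
    unfolding ex Phi_sum by (rule sum.cong) (simp_all add: Phi_single valid_edge)
  then show ?thesis using prodI unfolding zero_in_V_def I_def L_def Let_def by simp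
qed

end
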